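(* Let $\alpha\in(0,1]$ and let $G$ be a planar 3-tree with $n$ vertices. Then the tree $T(G)$ has at most $2n^{1-\alpha}$ hubs.
   Context: A planar 3-tree $G$ is constructed by starting from a triangle and repeatedly inserting a new vertex $u$ into a triangular face $\Delta=v_1v_2v_3$ of the current plane graph, joining $u$ to $v_1,v_2,v_3$. This process is encoded by a rooted tree $T=T(G)$: its nodes are triangles of $G$, its root is the initial triangle, and when $u$ is inserted into the face $\Delta=v_1v_2v_3$ (which is currently a leaf of $T$), the node $\Delta$ receives three children, the triangles $v_1v_2u$, $v_1uv_3$ and $uv_2v_3$. For a node $\Delta$ of $T$, let $V_\Delta$ be the set of vertices of $G$ lying in the interior of $\Delta$ (equivalently, the vertices inserted at nodes of the subtree rooted at $\Delta$), and $\mathrm{weight}(\Delta)=|V_\Delta|$. A node is heavy if its weight is at least $n^\alpha$. Hubs are defined top-down: the root of $T$ is a hub, and a non-root node $\Delta$ is a hub if $n^\alpha\le \mathrm{weight}(\Delta)\le \mathrm{weight}(\Delta')-n^\alpha$ for every hub $\Delta'$ that is an ancestor of $\Delta$. *)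

theory Defs
  imports Complex_Main
begin

text \<open>A leaf is a face (triangle) into which
no vertex is inserted; a node Ins u c1 c2 c3 records that vertex u is inserted
into the current triangle v1 v2 v3, the children being (in this order) the
triangles v1 v2 u, v1 u v3 and u v2 v3.\<close>

datatype 'v ctree = Leaf | Ins 'v "'v ctree" "'v ctree" "'v ctree"

fun inserted :: "'v ctree \<Rightarrow> 'v list" where
  "inserted Leaf = []"
| "inserted (Ins u a b c) = u # inserted a @ inserted b @ inserted c"

fun cedges :: "'v \<times> 'v \<times> 'v \<Rightarrow> 'v ctree \<Rightarrow> 'v set set" where
  "cedges (v1, v2, v3) Leaf = {}"
| "cedges (v1, v2, v3) (Ins u a b c) =
     {{u, v1}, {u, v2}, {u, v3}} \<union> cedges (v1, v2, u) a \<union> cedges (v1, u, v3) b \<union> cedges (u, v2, v3) c"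

definition valid_construction :: "'v \<times> 'v \<times> 'v \<Rightarrow> 'v ctree \<Rightarrow> bool" where
  "valid_construction \<Delta> t \<longleftrightarrow>
     (case \<Delta> of (v1, v2, v3) \<Rightarrow> distinct ([v1, v2, v3] @ inserted t))"

definition graph_vertices :: "'v \<times> 'v \<times> 'v \<Rightarrow> 'v ctree \<Rightarrow> 'v set" where
  "graph_vertices \<Delta> t = (case \<Delta> of (v1, v2, v3) \<Rightarrow> {v1, v2, v3} \<union> set (inserted t))"

definition graph_edges :: "'v \<times> 'v \<times> 'v \<Rightarrow> 'v ctree \<Rightarrow> 'v set set" where
  "graph_edges \<Delta> t = (case \<Delta> of (v1, v2, v3) \<Rightarrow> {{v1, v2}, {v2, v3}, {v1, v3}} \<union> cedges \<Delta> t)"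

text \<open>Nodes of T are addressed by paths (lists of child indices 0,1,2) from the root.\<close>
fun subtree :: "'v ctree \<Rightarrow> nat list \<Rightarrow> 'v ctree" where
  "subtree t [] = t"
| "subtree Leaf (i # p) = Leaf"
| "subtree (Ins u a b c) (i # p) =
     (if i = 0 then subtree a p else if i = 1 then subtree b p else subtree c p)"

fun is_node :: "'v ctree \<Rightarrow> nat list \<Rightarrow> bool" where
  "is_node t [] = True"
| "is_node Leaf (i # p) = False"
| "is_node (Ins u a b c) (i # p) =
     (if i = 0 then is_node a p else if i = 1 then is_node b p else if i = 2 then is_node c p else False)"

definition nodes :: "'v ctree \<Rightarrow> nat list set" where
  "nodes t = {p. is_node t p}"

definition V_of :: "'v ctree \<Rightarrow> nat list \<Rightarrow> 'v set" where
  "V_of t p = set (inserted (subtree t p))"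

definition weight :: "'v ctree \<Rightarrow> nat list \<Rightarrow> nat" where
  "weight t p = card (V_of t p)"

text \<open>Hubs, defined top-down with threshold x = n powr alpha.  Ancestors of p are its
proper prefixes take k p, k < length p.\<close>
function is_hub :: "'v ctree \<Rightarrow> real \<Rightarrow> nat list \<Rightarrow> bool" where
  "is_hub t x p \<longleftrightarrow> is_node t p \<and>
     (p = [] \<or>
      (x \<le> real (weight t p) \<and>
       (\<forall>k \<in> {..<length p}. is_hub t x (take k p) \<longrightarrow>
           real (weight t p) \<le> real (weight t (take k p)) - x)))"
  by pat_completeness auto
termination
  by (relation "measure (\<lambda>(t, x, p). length p)") auto

declare is_hub.simps [simp del]

definition hubs :: "'v ctree \<Rightarrow> real \<Rightarrow> nat list set" where
  "hubs t x = {p. is_hub t x p}"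

end

theory Submission
  imports Defs
begin

definition wt :: "'v ctree \<Rightarrow> nat" where "wt s = card (set (inserted s))"

fun hs :: "real \<Rightarrow> 'v ctree \<Rightarrow> real \<Rightarrow> nat list set" where
  "hs x Leaf B = {}"
| "hs x (Ins u a b c) B =
     (if x \<le> real (wt (Ins u a b c)) \<and> real (wt (Ins u a b c)) \<le> B
      then insert [] (Cons 0 ` hs x a (real (wt (Ins u a b c)) - x) \<union> Cons 1 ` hs x b (real (wt (Ins u a b c)) - x)
              \<union> Cons 2 ` hs x c (real (wt (Ins u a b c)) - x))
      else Cons 0 ` hs x a B \<union> Cons 1 ` hs x b B \<union> Cons 2 ` hs x c B)"

lemma subtree_Leaf[simp]: "subtree Leaf r = Leaf"
  by (cases r) auto

lemma is_node_Leaf[simp]: "is_node Leaf r \<longleftrightarrow> r = []"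
  by (cases r) auto

lemma subtree_append: "subtree t (p @ r) = subtree (subtree t p) r"
  by (induction t p rule: subtree.induct) auto

lemma is_node_append: "is_node t (p @ r) \<longleftrightarrow> is_node t p \<and> is_node (subtree t p) r"
  by (induction t p rule: is_node.induct) auto

lemma weight_wt: "weight t p = wt (subtree t p)"
  by (simp add: weight_def V_of_def wt_def)

lemma is_hub_unf: "is_hub t x p \<longleftrightarrow> is_node t p \<and>
     (p = [] \<or> (x \<le> real (weight t p) \<and>
       (\<forall>k < length p. is_hub t x (take k p) \<longrightarrow> real (weight t p) \<le> real (weight t (take k p)) - x)))"
  by (subst is_hub.simps) auto

lemma hub_root[simp]: "is_hub t x []"
  by (subst is_hub_unf) simp

lemma hs_elems: "r \<in> hs x s B \<Longrightarrow> r = [] \<or> (\<exists>i r'. r = i # r' \<and> i \<le> 2)"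
  by (cases s) (auto split: if_splits)

lemma hub_char:
  assumes "x > 0"
  shows "subtree t q = s \<Longrightarrow> is_node t q \<Longrightarrow> q \<noteq> [] \<Longrightarrow>
    (\<forall>y. y \<le> B \<longleftrightarrow> (\<forall>k<length q. is_hub t x (take k q) \<longrightarrow> y \<le> real (weight t (take k q)) - x))
    \<Longrightarrow> is_hub t x (q @ r) \<longleftrightarrow> r \<in> hs x s B"
proof (induction s arbitrary: q B r)
  case Leaf
  then show ?case
  proof -
    have "\<not> is_hub t x (q @ r)"
    proof
      assume h: "is_hub t x (q @ r)"
      then have "is_node t (q @ r)" by (simp add: is_hub_unf[of t x "q @ r"])
      then have "r = []" using Leaf by (simp add: is_node_append)
      then have "is_hub t x q" using h by simp
      then show False using Leaf assms by (simp add: is_hub_unf[of t x q] weight_wt wt_def)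
    qed
    then show ?thesis by simp
  qed
next
  case (Ins u a b c)
  define w where "w = real (wt (Ins u a b c))"
  have wq: "real (weight t q) = w" using Ins.prems by (simp add: weight_wt w_def)
  have hq: "is_hub t x q \<longleftrightarrow> x \<le> w \<and> w \<le> B"
    using Ins.prems wq by (simp add: is_hub_unf[of t x q])
  define B' where "B' = (if x \<le> w \<and> w \<le> B then w - x else B)"
  have cond: "\<forall>y. y \<le> B' \<longleftrightarrow> (\<forall>k<length (q @ [i]). is_hub t x (take k (q @ [i])) \<longrightarrow> y \<le> real (weight t (take k (q @ [i]))) - x)" for i :: nat
  proof
    fix y
    have "(\<forall>k<length (q @ [i]). is_hub t x (take k (q @ [i])) \<longrightarrow> y \<le> real (weight t (take k (q @ [i]))) - x)
      \<longleftrightarrow> (\<forall>k<length q. is_hub t x (take k q) \<longrightarrow> y \<le> real (weight t (take k q)) - x) \<and> (is_hub t x q \<longrightarrow> y \<le> real (weight t q) - x)"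
      by (auto simp: less_Suc_eq)
    also have "\<dots> \<longleftrightarrow> y \<le> B \<and> (x \<le> w \<and> w \<le> B \<longrightarrow> y \<le> w - x)"
      using Ins.prems(4) hq wq by simp
    also have "\<dots> \<longleftrightarrow> y \<le> B'" using assms by (auto simp: B'_def)
    finally show "y \<le> B' \<longleftrightarrow> (\<forall>k<length (q @ [i]). is_hub t x (take k (q @ [i])) \<longrightarrow> y \<le> real (weight t (take k (q @ [i]))) - x)" by simp
  qed
  have hsI: "hs x (Ins u a b c) B = (if x \<le> w \<and> w \<le> B then {[]} else {}) \<union> Cons 0 ` hs x a B' \<union> Cons 1 ` hs x b B' \<union> Cons 2 ` hs x c B'"
    by (simp add: w_def[symmetric] B'_def)
  show ?case
  proof (cases r)
    case Nil
    then show ?thesis using hq hsI by auto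
  next
    case (Cons i r')
    have nq: "is_node t (q @ [j]) \<longleftrightarrow> j \<le> 2" for j
      using Ins.prems by (simp add: is_node_append)
    have sq: "subtree t (q @ [j]) = (if j = 0 then a else if j = 1 then b else c)" for j
      using Ins.prems by (simp add: subtree_append)
    have qr: "q @ r = (q @ [i]) @ r'" using Cons by simp
    show ?thesis
    proof (cases "i \<le> 2")
      case False
      have "\<not> is_node t (q @ r)" using Ins.prems Cons False by (simp add: is_node_append)
      then have "\<not> is_hub t x (q @ r)" by (simp add: is_hub_unf[of t x "q @ r"])
      moreover have "r \<notin> hs x (Ins u a b c) B" using hs_elems[of r x "Ins u a b c" B] Cons False by auto
      ultimately show ?thesis by simp
    next
      case True
      then consider "i = 0" | "i = 1" | "i = 2" by linarith
      then show ?thesis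
      proof cases
        case 1
        then show ?thesis using Ins.IH(1)[of "q @ [i]" B' r'] sq[of i] nq[of i] cond[of i] qr hsI Cons by auto
      next
        case 2
        then show ?thesis using Ins.IH(2)[of "q @ [i]" B' r'] sq[of i] nq[of i] cond[of i] qr hsI Cons by auto
      next
        case 3
        then show ?thesis using Ins.IH(3)[of "q @ [i]" B' r'] sq[of i] nq[of i] cond[of i] qr hsI Cons by auto
      qed
    qed
  qed
qed

definition C :: "real \<Rightarrow> real \<Rightarrow> real \<Rightarrow> bool" where
  "C h w b \<longleftrightarrow> h = 0 \<or> h \<le> 2*w - 2 \<or> h \<le> 2 * min w b - 1"

lemma arith_nonroot:
  fixes ha hb hc wa wb wc e b :: real
  assumes "e > 0" "wa \<ge> 0" "wb \<ge> 0" "wc \<ge> 0"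
    "ha = 0 \<or> ha \<ge> 1" "hb = 0 \<or> hb \<ge> 1" "hc = 0 \<or> hc \<ge> 1"
    "C ha wa b" "C hb wb b" "C hc wc b"
  shows "C (ha+hb+hc) (e+wa+wb+wc) b"
  using assms unfolding C_def min_def by (smt (verit))

lemma arith_root:
  fixes ha hb hc wa wb wc e b :: real
  assumes "e > 0" "wa \<ge> 0" "wb \<ge> 0" "wc \<ge> 0" "w = e+wa+wb+wc" "1 \<le> w" "w \<le> b"
    "ha = 0 \<or> ha \<ge> 1" "hb = 0 \<or> hb \<ge> 1" "hc = 0 \<or> hc \<ge> 1"
    "C ha wa (w-1)" "C hb wb (w-1)" "C hc wc (w-1)"
  shows "C (1+ha+hb+hc) w b"
  using assms unfolding C_def min_def by (smt (verit))

lemma arith_top: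
  fixes ha hb hc wa wb wc e N :: real
  assumes "e > 0" "wa \<ge> 0" "wb \<ge> 0" "wc \<ge> 0" "N = 4*e+wa+wb+wc" "1 \<le> N"
    "ha = 0 \<or> ha \<ge> 1" "hb = 0 \<or> hb \<ge> 1" "hc = 0 \<or> hc \<ge> 1"
    "C ha wa b1" "C hb wb b2" "C hc wc b3"
  shows "1+ha+hb+hc \<le> 2 * N"
  using assms unfolding C_def min_def by (smt (verit))

lemma wt_len: "distinct (inserted s) \<Longrightarrow> wt s = length (inserted s)"
  by (simp add: wt_def distinct_card)

lemma card3:
  assumes "finite A" "finite B" "finite D"
  shows "card (Cons (0::nat) ` A \<union> Cons 1 ` B \<union> Cons 2 ` D) = card A + card B + card D"
proof -
  have i: "card (Cons i ` X) = card X" for i :: nat and X by (simp add: card_image)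
  have "card (Cons (0::nat) ` A \<union> Cons 1 ` B \<union> Cons 2 ` D) = card (Cons (0::nat) ` A \<union> Cons 1 ` B) + card (Cons 2 ` D)"
    using assms by (intro card_Un_disjoint) auto
  also have "card (Cons (0::nat) ` A \<union> Cons 1 ` B) = card (Cons (0::nat) ` A) + card (Cons 1 ` B)"
    using assms by (intro card_Un_disjoint) auto
  finally show ?thesis by (simp add: i)
qed

lemma hs_bound:
  assumes "x > 0"
  shows "distinct (inserted s) \<Longrightarrow> finite (hs x s B) \<and> C (real (card (hs x s B))) (real (wt s) / x) (B / x)"
proof (induction s arbitrary: B)
  case Leaf
  then show ?case by (simp add: C_def)
next
  case (Ins u a b c)
  have da: "distinct (inserted a)" and db: "distinct (inserted b)" and dc: "distinct (inserted c)"
    using Ins.prems by auto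
  have w: "real (wt (Ins u a b c)) = 1 + real (wt a) + real (wt b) + real (wt c)"
    using Ins.prems da db dc by (simp add: wt_len)
  define w' where "w' = real (wt (Ins u a b c))"
  have nn: "real k = 0 \<or> real k \<ge> 1" for k :: nat by auto
  have wdiv: "w' / x = 1/x + real (wt a)/x + real (wt b)/x + real (wt c)/x"
    using w by (simp add: w'_def add_divide_distrib)
  show ?case
  proof (cases "x \<le> w' \<and> w' \<le> B")
    case True
    let ?B = "w' - x"
    have hsI: "hs x (Ins u a b c) B = insert [] (Cons 0 ` hs x a ?B \<union> Cons 1 ` hs x b ?B \<union> Cons 2 ` hs x c ?B)"
      using True by (simp add: w'_def[symmetric])
    from Ins.IH(1)[OF da, of ?B] Ins.IH(2)[OF db, of ?B] Ins.IH(3)[OF dc, of ?B]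
    have f: "finite (hs x a ?B)" "finite (hs x b ?B)" "finite (hs x c ?B)"
      and ca: "C (real (card (hs x a ?B))) (real (wt a) / x) (?B / x)"
      and cb: "C (real (card (hs x b ?B))) (real (wt b) / x) (?B / x)"
      and cc: "C (real (card (hs x c ?B))) (real (wt c) / x) (?B / x)" by auto
    have card: "card (hs x (Ins u a b c) B) = 1 + card (hs x a ?B) + card (hs x b ?B) + card (hs x c ?B)"
      unfolding hsI
    proof (subst card_insert_disjoint)
      show "finite (Cons (0::nat) ` hs x a ?B \<union> Cons 1 ` hs x b ?B \<union> Cons 2 ` hs x c ?B)" using f by simp
      show "[] \<notin> Cons (0::nat) ` hs x a ?B \<union> Cons 1 ` hs x b ?B \<union> Cons 2 ` hs x c ?B" by auto
      show "Suc (card (Cons (0::nat) ` hs x a ?B \<union> Cons 1 ` hs x b ?B \<union> Cons 2 ` hs x c ?B)) =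
         1 + card (hs x a ?B) + card (hs x b ?B) + card (hs x c ?B)" using card3[OF f] by simp
    qed
    have B': "?B / x = w'/x - 1" using assms by (simp add: diff_divide_distrib)
    have g1: "1 \<le> w'/x" using True assms by simp
    have g2: "w'/x \<le> B/x" using True assms by (simp add: divide_right_mono)
    have "C (1 + real (card (hs x a ?B)) + real (card (hs x b ?B)) + real (card (hs x c ?B))) (w'/x) (B/x)"
      apply (rule arith_root[where e="1/x" and wa="real (wt a)/x" and wb="real (wt b)/x" and wc="real (wt c)/x"])
      using assms nn ca cb cc B' g1 g2 by (simp_all add: wdiv)
    moreover have "finite (hs x (Ins u a b c) B)" unfolding hsI using f by simp
    ultimately show ?thesis by (simp only: card of_nat_add of_nat_1 w'_def[symmetric] simp_thms)
  next
    case False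
    have hsI: "hs x (Ins u a b c) B = Cons 0 ` hs x a B \<union> Cons 1 ` hs x b B \<union> Cons 2 ` hs x c B"
      using False unfolding w'_def by auto
    from Ins.IH(1)[OF da, of B] Ins.IH(2)[OF db, of B] Ins.IH(3)[OF dc, of B]
    have f: "finite (hs x a B)" "finite (hs x b B)" "finite (hs x c B)"
      and ca: "C (real (card (hs x a B))) (real (wt a) / x) (B / x)"
      and cb: "C (real (card (hs x b B))) (real (wt b) / x) (B / x)"
      and cc: "C (real (card (hs x c B))) (real (wt c) / x) (B / x)" by auto
    have card: "card (hs x (Ins u a b c) B) = card (hs x a B) + card (hs x b B) + card (hs x c B)"
      unfolding hsI by (rule card3[OF f])
    have "C (real (card (hs x a B)) + real (card (hs x b B)) + real (card (hs x c B))) (w'/x) (B/x)"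
      unfolding wdiv
      by (rule arith_nonroot) (use assms nn ca cb cc in auto)
    moreover have "finite (hs x (Ins u a b c) B)" unfolding hsI using f by simp
    ultimately show ?thesis by (simp only: card of_nat_add of_nat_1 w'_def[symmetric] simp_thms)
  qed
qed

theorem lemma2:
  fixes v1 v2 v3 :: 'v and t :: "'v ctree" and \<alpha> :: real and n :: nat
  assumes "valid_construction (v1, v2, v3) t"
    and "0 < \<alpha>" and "\<alpha> \<le> 1"
    and "n = card (graph_vertices (v1, v2, v3) t)"
  shows "real (card (hubs t (real n powr \<alpha>))) \<le> 2 * real n powr (1 - \<alpha>)"
proof -
  have d: "distinct ([v1, v2, v3] @ inserted t)" using assms(1) by (simp add: valid_construction_def)
  have "graph_vertices (v1, v2, v3) t = set ([v1, v2, v3] @ inserted t)" by (simp add: graph_vertices_def)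
  then have nlen: "n = 3 + length (inserted t)" using assms(4) distinct_card[OF d] by simp
  define x where "x = real n powr \<alpha>"
  have n3: "real n \<ge> 3" using nlen by simp
  have xpos: "x > 0" using n3 by (simp add: x_def)
  have "x \<le> real n powr 1" unfolding x_def using n3 assms(3) by (intro powr_mono) auto
  then have xn: "x \<le> real n" using n3 by (simp add: powr_one)
  have N1: "1 \<le> real n / x" using xn xpos by simp
  have rhs: "2 * real n powr (1 - \<alpha>) = 2 * (real n / x)"
    unfolding x_def powr_diff using n3 by (simp add: powr_one)
  have dt: "distinct (inserted t)" using d by simp
  have "real (card (hubs t x)) \<le> 2 * (real n / x)"
  proof (cases t)
    case Leaf
    have "hubs t x = {[]}"
    proof -
      have "is_hub t x p \<longleftrightarrow> p = []" for p
      proof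
        assume "is_hub t x p"
        then have "is_node t p" using is_hub_unf[of t x p] by blast
        then show "p = []" using Leaf by simp
      next
        assume "p = []"
        then show "is_hub t x p" by (simp add: hub_root)
      qed
      then show ?thesis unfolding hubs_def by auto
    qed
    then show ?thesis using N1 by simp
  next
    case (Ins u a b c)
    define B where "B = real (wt t) - x"
    have hub_i: "is_hub t x (i # r) \<longleftrightarrow> i \<le> 2 \<and> r \<in> hs x (subtree t [i]) B" for i r
    proof (cases "i \<le> 2")
      case True
      have cond: "\<forall>y. y \<le> B \<longleftrightarrow> (\<forall>k<length [i]. is_hub t x (take k [i]) \<longrightarrow> y \<le> real (weight t (take k [i])) - x)"
        by (simp add: B_def weight_wt hub_root)
      have "is_node t [i]" using True Ins by auto
      from hub_char[OF xpos refl this _ cond, of r] True show ?thesis by simp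
    next
      case False
      then have "\<not> is_node t (i # r)" using Ins by auto
      then show ?thesis using False is_hub_unf[of t x "i # r"] by blast
    qed
    have hubsI: "hubs t x = insert [] (Cons 0 ` hs x a B \<union> Cons 1 ` hs x b B \<union> Cons 2 ` hs x c B)"
    proof -
      have "p \<in> hubs t x \<longleftrightarrow> p \<in> insert [] (Cons 0 ` hs x a B \<union> Cons 1 ` hs x b B \<union> Cons 2 ` hs x c B)" for p
      proof (cases p)
        case Nil
        then show ?thesis by (simp add: hubs_def hub_root)
      next
        case (Cons i r)
        then show ?thesis unfolding hubs_def using hub_i[of i r] Ins
          by (cases "i = 0"; cases "i = 1"; cases "i = 2") auto
      qed
      then show ?thesis by blast
    qed
    have da: "distinct (inserted a)" and db: "distinct (inserted b)" and dc: "distinct (inserted c)"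
      using dt Ins by auto
    have wsum: "real n = 4 + real (wt a) + real (wt b) + real (wt c)"
      using nlen Ins da db dc dt by (simp add: wt_len)
    from hs_bound[OF xpos da, of B] hs_bound[OF xpos db, of B] hs_bound[OF xpos dc, of B]
    have f: "finite (hs x a B)" "finite (hs x b B)" "finite (hs x c B)"
      and ca: "C (real (card (hs x a B))) (real (wt a) / x) (B / x)"
      and cb: "C (real (card (hs x b B))) (real (wt b) / x) (B / x)"
      and cc: "C (real (card (hs x c B))) (real (wt c) / x) (B / x)" by auto
    have card: "card (hubs t x) = 1 + card (hs x a B) + card (hs x b B) + card (hs x c B)"
      unfolding hubsI
    proof (subst card_insert_disjoint)
      show "finite (Cons (0::nat) ` hs x a B \<union> Cons 1 ` hs x b B \<union> Cons 2 ` hs x c B)" using f by simp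
      show "[] \<notin> Cons (0::nat) ` hs x a B \<union> Cons 1 ` hs x b B \<union> Cons 2 ` hs x c B" by auto
      show "Suc (card (Cons (0::nat) ` hs x a B \<union> Cons 1 ` hs x b B \<union> Cons 2 ` hs x c B)) =
         1 + card (hs x a B) + card (hs x b B) + card (hs x c B)" using card3[OF f] by simp
    qed
    have nx: "real n / x = 4 * (1/x) + real (wt a) / x + real (wt b) / x + real (wt c) / x"
      using wsum by (simp add: add_divide_distrib)
    have nn: "real k = 0 \<or> real k \<ge> 1" for k :: nat by auto
    have "1 + real (card (hs x a B)) + real (card (hs x b B)) + real (card (hs x c B)) \<le> 2 * (real n / x)"
      by (rule arith_top[OF _ _ _ _ nx N1 nn nn nn ca cb cc]) (use xpos in auto)
    then show ?thesis using card by simp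
  qed
  then show ?thesis using rhs by (simp add: x_def)
qed

end
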